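(* Let $k\ge 1$, $n=2k$, and let $C=(c_{ij})$ be a symmetric $n\times n$ relaxed Van der Veen matrix, i.e. \[ c_{j+1,j}+c_{lm}-c_{jl}-c_{j+1,m}\le 0 \] for all $j,l,m$ with $1\le j<j+1<l\le n$, $j+1<m\le n$, $j\equiv m \pmod 2$ and $j+1\equiv l\pmod 2$. Then the even-odd BTSP with distance matrix $C$ is pyramidally solvable, i.e. there is an optimal feasible tour which is pyramidal.
   Context: A tour on $\{1,\ldots,n\}$ is a cyclic permutation $\tau$ of $\{1,\ldots,n\}$; its length is $c(\tau)=\sum_{i=1}^n c_{i\tau(i)}$. In the bipartite TSP (BTSP), given a symmetric $n\times n$ matrix $C$ ($n=2k$) and a partition of the cities into $K_1,K_2$ with $|K_1|=|K_2|=k$, a feasible tour is a tour $\tau$ such that $\tau(i),\tau^{-1}(i)\in K_2$ for all $i\in K_1$ and $\tau(i),\tau^{-1}(i)\in K_1$ for all $i\in K_2$; the goal is a feasible tour of minimum length. The even-odd BTSP is the case $K_1=\{1,3,\ldots,2k-1\}$ and $K_2=\{2,4,\ldots,2k\}$. A tour $\tau=\langle 1,\tau_2,\ldots,\tau_m,n,\tau_{m+2},\ldots,\tau_{n},1\rangle$ (the cyclic sequence of visited cities starting at city 1) is pyramidal if $1<\tau_2<\cdots<\tau_m<n$ and $n>\tau_{m+2}>\cdots>\tau_{n}>1$. An instance is pyramidally solvable if an optimal solution can be found within the set of pyramidal tours. *)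

theory Defs
  imports Complex_Main "HOL-Combinatorics.Permutations"
begin

text \<open>Cities are 1..n; a matrix is a function nat => nat => real (only entries in {1..n} matter).\<close>

definition is_tour :: "nat \<Rightarrow> (nat \<Rightarrow> nat) \<Rightarrow> bool" where
  "is_tour n \<tau> \<longleftrightarrow> \<tau> permutes {1..n} \<and>
     (\<forall>i\<in>{1..n}. \<forall>j\<in>{1..n}. \<exists>m. (\<tau> ^^ m) i = j)"

definition tour_length :: "(nat \<Rightarrow> nat \<Rightarrow> real) \<Rightarrow> nat \<Rightarrow> (nat \<Rightarrow> nat) \<Rightarrow> real" where
  "tour_length C n \<tau> = (\<Sum>i=1..n. C i (\<tau> i))"

text \<open>Even-odd BTSP: K1 = odd cities, K2 = even cities.\<close>
definition feasible_eo :: "nat \<Rightarrow> (nat \<Rightarrow> nat) \<Rightarrow> bool" where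
  "feasible_eo n \<tau> \<longleftrightarrow>
     (\<forall>i\<in>{1..n}. odd i \<longrightarrow> even (\<tau> i) \<and> even (inv_into {1..n} \<tau> i)) \<and>
     (\<forall>i\<in>{1..n}. even i \<longrightarrow> odd (\<tau> i) \<and> odd (inv_into {1..n} \<tau> i))"

definition pyramidal :: "nat \<Rightarrow> (nat \<Rightarrow> nat) \<Rightarrow> bool" where
  "pyramidal n \<tau> \<longleftrightarrow> (\<exists>m. 0 < m \<and> m < n \<and> (\<tau> ^^ m) 1 = n \<and>
     (\<forall>i j. i < j \<and> j \<le> m \<longrightarrow> (\<tau> ^^ i) 1 < (\<tau> ^^ j) 1) \<and>
     (\<forall>i j. m \<le> i \<and> i < j \<and> j < n \<longrightarrow> (\<tau> ^^ j) 1 < (\<tau> ^^ i) 1))"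

definition symmetric_matrix :: "nat \<Rightarrow> (nat \<Rightarrow> nat \<Rightarrow> real) \<Rightarrow> bool" where
  "symmetric_matrix n C \<longleftrightarrow> (\<forall>i\<in>{1..n}. \<forall>j\<in>{1..n}. C i j = C j i)"

definition relaxed_vdv :: "nat \<Rightarrow> (nat \<Rightarrow> nat \<Rightarrow> real) \<Rightarrow> bool" where
  "relaxed_vdv n C \<longleftrightarrow> (\<forall>j l m. 1 \<le> j \<and> j + 1 < l \<and> l \<le> n \<and> j + 1 < m \<and> m \<le> n \<and>
      j mod 2 = m mod 2 \<and> (j + 1) mod 2 = l mod 2 \<longrightarrow>
      C (j+1) j + C l m - C j l - C (j+1) m \<le> 0)"

end

theory Submission
  imports Defs
begin

fun pc :: "(nat \<Rightarrow> nat \<Rightarrow> real) \<Rightarrow> nat list \<Rightarrow> real" where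
  "pc C [] = 0"
| "pc C [x] = 0"
| "pc C (x # y # zs) = C x y + pc C (y # zs)"

definition cc :: "(nat \<Rightarrow> nat \<Rightarrow> real) \<Rightarrow> nat list \<Rightarrow> real" where
  "cc C xs = pc C xs + C (last xs) (hd xs)"

definition par :: "nat \<Rightarrow> nat \<Rightarrow> bool" where
  "par a b \<longleftrightarrow> (even a \<longleftrightarrow> odd b)"

definition cyc_ok :: "nat list \<Rightarrow> bool" where
  "cyc_ok xs \<longleftrightarrow> successively par xs \<and> par (last xs) (hd xs)"

definition valley :: "nat list \<Rightarrow> bool" where
  "valley L \<longleftrightarrow> (\<exists>P Q. L = P @ 1 # Q \<and> sorted_wrt (>) (P @ [1]) \<and> sorted_wrt (<) (1 # Q))"

definition symon :: "nat set \<Rightarrow> (nat \<Rightarrow> nat \<Rightarrow> real) \<Rightarrow> bool" where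
  "symon S C \<longleftrightarrow> (\<forall>a\<in>S. \<forall>b\<in>S. C a b = C b a)"

lemma symon_mono: "symon S C \<Longrightarrow> T \<subseteq> S \<Longrightarrow> symon T C"
  unfolding symon_def by blast

lemma symonD: "symon S C \<Longrightarrow> a \<in> S \<Longrightarrow> b \<in> S \<Longrightarrow> C a b = C b a"
  unfolding symon_def by blast

lemma par_sym: "par a b = par b a" unfolding par_def by auto

lemma par_flip: "(\<lambda>x y. par y x) = par" unfolding par_def by (auto simp: fun_eq_iff)

lemma succ_par_rev[simp]: "successively par (rev xs) = successively par xs"
  by (simp only: successively_rev par_flip)

lemma pc_Cons: "pc C (x # ys) = (if ys = [] then 0 else C x (hd ys) + pc C ys)"
  by (cases ys) auto

lemma pc_append: "pc C (xs @ ys) = pc C xs + pc C ys + (if xs \<noteq> [] \<and> ys \<noteq> [] then C (last xs) (hd ys) else 0)"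
proof (induction xs)
  case Nil then show ?case by simp
next
  case (Cons x xs)
  show ?case
  proof (cases xs)
    case Nil
    then show ?thesis by (simp add: pc_Cons)
  next
    case (Cons y zs)
    then show ?thesis using Cons.IH by simp
  qed
qed

lemma pc_rev: "symon (set xs) C \<Longrightarrow> pc C (rev xs) = pc C xs"
proof (induction xs)
  case Nil then show ?case by simp
next
  case (Cons x xs)
  have s: "symon (set xs) C" by (rule symon_mono[OF Cons.prems]) auto
  have ih: "pc C (rev xs) = pc C xs" by (rule Cons.IH[OF s])
  show ?case
  proof (cases xs)
    case Nil
    then show ?thesis by simp
  next
    case (Cons y zs)
    have "C y x = C x y" by (rule symonD[OF Cons.prems]) (auto simp: Cons)
    have "pc C (rev (x # xs)) = pc C (rev xs @ [x])" by simp
    also have "\<dots> = pc C (rev xs) + C y x" using Cons by (simp only: pc_append) (simp add: last_rev)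
    also have "\<dots> = C x y + pc C xs" using ih \<open>C y x = C x y\<close> by simp
    also have "\<dots> = pc C (x # xs)" using Cons by simp
    finally show ?thesis .
  qed
qed

lemma cc_rot: "cc C (xs @ ys) = cc C (ys @ xs)"
  unfolding cc_def by (cases "xs = []"; cases "ys = []") (simp_all add: pc_append)

lemma cc_rev: "symon (set xs) C \<Longrightarrow> cc C (rev xs) = cc C xs"
proof (cases "xs = []")
  case False
  assume s: "symon (set xs) C"
  have "C (hd xs) (last xs) = C (last xs) (hd xs)" by (rule symonD[OF s]) (auto simp: False)
  then show ?thesis unfolding cc_def using False by (simp add: pc_rev[OF s] hd_rev last_rev)
qed simp

lemma cyc_ok_rot: "cyc_ok (xs @ ys) = cyc_ok (ys @ xs)"
  unfolding cyc_ok_def by (cases "xs = []"; cases "ys = []") (auto simp: successively_append_iff)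

lemma cyc_ok_rev: "cyc_ok (rev xs) = cyc_ok xs"
  unfolding cyc_ok_def by (cases "xs = []") (auto simp: hd_rev last_rev par_sym)

lemma valley_snoc: "valley L \<Longrightarrow> \<forall>x\<in>set L. x < y \<Longrightarrow> valley (L @ [y])"
  unfolding valley_def
  apply clarify
  subgoal for P Q by (rule exI[of _ P], rule exI[of _ "Q @ [y]"]) (auto simp: sorted_wrt_append)
  done

lemma valley_rev: "valley L \<Longrightarrow> valley (rev L)"
  unfolding valley_def
  apply clarify
  subgoal for P Q by (rule exI[of _ "rev Q"], rule exI[of _ "rev P"]) (auto simp: sorted_wrt_append sorted_wrt_rev)
  done

lemma par_mod: "par a b \<Longrightarrow> par b c \<Longrightarrow> a mod 2 = c mod 2"
  unfolding par_def by presburger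

lemma core:
  assumes sym: "symon {1..n} C" and vdv: "relaxed_vdv n C"
  shows "n - j = d \<Longrightarrow> distinct (L @ R) \<Longrightarrow> set (L @ R) = {1..n} \<Longrightarrow> set L = {1..j} \<Longrightarrow> 1 \<le> j
    \<Longrightarrow> last L = j \<Longrightarrow> valley L \<Longrightarrow> cyc_ok (L @ R) \<Longrightarrow>
    \<exists>ys. distinct ys \<and> set ys = {1..n} \<and> last ys = n \<and> valley ys \<and> cyc_ok ys \<and> cc C ys \<le> cc C (L @ R)"
proof (induction d arbitrary: j L R)
  case 0
  have Lne: "L \<noteq> []" using 0(4,5) by auto
  have "j \<in> set L" using 0(6) Lne by auto
  then have "j \<in> set (L @ R)" by simp
  then have "j \<in> {1..n}" using 0(3) by blast
  then have "j \<le> n" by simp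
  then have jn: "j = n" using 0(1) by simp
  have sLn: "set L = {1..n}" using 0(4) jn by simp
  have "R = []"
  proof -
    have "set R \<subseteq> set (L @ R)" by auto
    also have "\<dots> = {1..n}" by (rule 0(3))
    finally have "set R \<subseteq> set L" using sLn by simp
    moreover have "set L \<inter> set R = {}" using 0(2) unfolding distinct_append by blast
    ultimately show ?thesis by (cases R) auto
  qed
  then have "distinct L" "cyc_ok L" using 0(2,8) by auto
  then show ?case using sLn jn 0(6,7) \<open>R = []\<close> by (intro exI[of _ L]) simp
next
  case (Suc d)
  have Lne: "L \<noteq> []" using Suc.prems(4,5) by auto
  have jn: "j < n" using Suc.prems(1) by simp
  have jR: "j + 1 \<in> set R"
  proof -
    have "j + 1 \<in> set (L @ R)" using Suc.prems(3) jn by simp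
    moreover have "j + 1 \<notin> set L" using Suc.prems(4) by simp
    ultimately show ?thesis by simp
  qed
  have sR: "set R \<subseteq> {1..n}" using Suc.prems(3) by auto
  have dR: "set R \<inter> {1..j} = {}" using Suc.prems(2,4) by auto
  have sL1: "set (L @ [j+1]) = {1..j+1}" using Suc.prems(4) by auto
  have valL1: "valley (L @ [j+1])" using Suc.prems(4,7) by (intro valley_snoc) auto
  show ?case
  proof (cases "hd R = j + 1")
    case True
    obtain R' where R: "R = (j+1) # R'" using True jR by (cases R) auto
    have eqL: "(L @ [j+1]) @ R' = L @ R" using R by simp
    have "\<exists>ys. distinct ys \<and> set ys = {1..n} \<and> last ys = n \<and> valley ys \<and> cyc_ok ys \<and> cc C ys \<le> cc C ((L @ [j+1]) @ R')"
      apply (rule Suc.IH[of "j+1"]) unfolding eqL using Suc.prems(1,2,3,8) valL1 sL1 by simp_all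
    then show ?thesis unfolding eqL .
  next
    case hdR: False
    show ?thesis
    proof (cases "last R = j + 1")
      case True
      define R0 where "R0 = butlast R"
      have R: "R = R0 @ [j+1]" using True jR unfolding R0_def by (metis append_butlast_last_id empty_iff list.set(1))
      have eq: "(rev L @ [j+1]) @ rev R0 = rev (R0 @ [j+1] @ L)" by simp
      have sym2: "symon (set (R0 @ [j+1] @ L)) C" by (rule symon_mono[OF sym]) (use Suc.prems R in auto)
      have ccq: "cc C ((rev L @ [j+1]) @ rev R0) = cc C (L @ R)"
        unfolding eq cc_rev[OF sym2] using R cc_rot[where C=C and xs="R0 @ [j+1]" and ys=L] by simp
      have okq: "cyc_ok ((rev L @ [j+1]) @ rev R0) = cyc_ok (L @ R)"
        unfolding eq cyc_ok_rev using R cyc_ok_rot[of "R0 @ [j+1]" L] by simp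
      have "\<exists>ys. distinct ys \<and> set ys = {1..n} \<and> last ys = n \<and> valley ys \<and> cyc_ok ys \<and> cc C ys \<le> cc C ((rev L @ [j+1]) @ rev R0)"
        apply (rule Suc.IH[of "j+1"])
        using Suc.prems R okq valley_snoc[OF valley_rev[OF Suc.prems(7)], of "j+1"] by auto
      then show ?thesis using ccq by auto
    next
      case lastR: False
      obtain l R1 where R: "R = l # R1" using jR by (cases R) auto
      have "j + 1 \<in> set R1" using R hdR jR by auto
      then obtain A R2 where R1: "R1 = A @ (j+1) # R2" by (meson split_list)
      have "R2 \<noteq> []" using lastR R R1 by auto
      then obtain m B where R2: "R2 = m # B" by (cases R2) auto
      have RR: "R = l # A @ (j+1) # m # B" using R R1 R2 by simp
      have lgt: "j + 1 < l" using RR sR dR Suc.prems(2) by auto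
      have mgt: "j + 1 < m" using RR sR dR Suc.prems(2) by auto
      have ln: "l \<le> n" "m \<le> n" using RR sR by auto
      have sLR: "successively par (L @ R)" and pcl: "par (last (L @ R)) (hd (L @ R))"
        using Suc.prems(8) unfolding cyc_ok_def by auto
      have s1: "successively par L" and sRp: "successively par R" and p1: "par j l"
        using sLR successively_append_iff[of par L R] Suc.prems(6) Lne RR by auto
      have "successively par ((l # A @ [j+1]) @ (m # B))" using sRp RR by simp
      then have s2: "successively par (l # A @ [j+1])" and s3: "successively par (m # B)"
        and p2: "par (j+1) m"
        using successively_append_iff[of par "l # A @ [j+1]" "m # B"] by auto
      have pc1: "par (last (m # B)) (hd L)" using pcl RR Lne by simp
      have "par j (j+1)" unfolding par_def by auto
      have "j mod 2 = m mod 2" by (rule par_mod[OF \<open>par j (j+1)\<close> p2])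
      moreover have "(j+1) mod 2 = l mod 2" by (rule par_mod[OF _ p1]) (simp add: par_def)
      ultimately have V: "C (j+1) j + C l m - C j l - C (j+1) m \<le> 0"
        using vdv lgt mgt ln Suc.prems(5) unfolding relaxed_vdv_def by blast
      have Cs: "C (j+1) j = C j (j+1)" by (rule symonD[OF sym]) (use jn Suc.prems(5) in auto)
      have sym3: "symon (set (l # A @ [j+1])) C" by (rule symon_mono[OF sym]) (use sR RR in auto)
      have prev: "pc C ((j+1) # rev A @ [l]) = pc C (l # A @ [j+1])"
        using pc_rev[OF sym3] by simp
      define xs' where "xs' = (L @ [j+1]) @ rev A @ l # m # B"
      have e1: "cc C (L @ R) = pc C L + C j l + pc C (l # A @ [j+1]) + C (j+1) m + pc C (m # B) + C (last (m # B)) (hd L)"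
      proof -
        have "pc C (L @ R) = pc C L + C j l + pc C (l # A @ [j+1]) + C (j+1) m + pc C (m # B)"
          using pc_append[of C L R] pc_append[of C "l # A @ [j+1]" "m # B"] RR Lne Suc.prems(6) by simp
        then show ?thesis unfolding cc_def using Lne RR by simp
      qed
      have e2: "cc C xs' = pc C L + C j (j+1) + pc C ((j+1) # rev A @ [l]) + C l m + pc C (m # B) + C (last (m # B)) (hd L)"
      proof -
        have x: "xs' = L @ ((j+1) # rev A @ [l]) @ (m # B)" unfolding xs'_def by simp
        have "pc C xs' = pc C L + C j (j+1) + pc C ((j+1) # rev A @ [l]) + C l m + pc C (m # B)"
          unfolding x
          using pc_append[of C L "((j+1) # rev A @ [l]) @ (m # B)"] pc_append[of C "(j+1) # rev A @ [l]" "m # B"] Lne Suc.prems(6) by simp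
        then show ?thesis unfolding cc_def using Lne x by simp
      qed
      have ccle: "cc C xs' \<le> cc C (L @ R)" using e1 e2 prev V Cs by simp
      have s2': "successively par ((j+1) # rev A @ [l])"
        using s2 succ_par_rev[of "l # A @ [j+1]"] by simp
      have okx: "cyc_ok xs'"
      proof -
        have x: "xs' = L @ ((j+1) # rev A @ [l]) @ (m # B)" unfolding xs'_def by simp
        have "par l m" using p1 p2 unfolding par_def by auto
        have "successively par (((j+1) # rev A @ [l]) @ (m # B))"
          using successively_append_iff[of par "(j+1) # rev A @ [l]" "m # B"] s2' s3 \<open>par l m\<close> by simp
        then have "successively par (L @ ((j+1) # rev A @ [l]) @ (m # B))"
          using successively_append_iff[of par L "((j+1) # rev A @ [l]) @ (m # B)"] s1 Lne Suc.prems(6) \<open>par j (j+1)\<close> by simp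
        moreover have "par (last xs') (hd xs')" unfolding x using pc1 Lne by simp
        ultimately show ?thesis unfolding cyc_ok_def x by simp
      qed
      have "\<exists>ys. distinct ys \<and> set ys = {1..n} \<and> last ys = n \<and> valley ys \<and> cyc_ok ys \<and> cc C ys \<le> cc C ((L @ [j+1]) @ (rev A @ l # m # B))"
        apply (rule Suc.IH[of "j+1" "L @ [j+1]" "rev A @ l # m # B"])
        using Suc.prems RR okx valL1 unfolding xs'_def by auto
      then obtain ys where ys: "distinct ys \<and> set ys = {1..n} \<and> last ys = n \<and> valley ys \<and> cyc_ok ys"
        "cc C ys \<le> cc C ((L @ [j+1]) @ (rev A @ l # m # B))" by blast
      have "cc C ys \<le> cc C (L @ R)" using ys(2) ccle unfolding xs'_def by linarith
      then show ?thesis using ys(1) by blast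
    qed
  qed
qed

definition succ_of :: "nat list \<Rightarrow> nat \<Rightarrow> nat" where
  "succ_of zs x = (case map_of (zip zs (tl zs @ [hd zs])) x of Some y \<Rightarrow> y | None \<Rightarrow> x)"

lemma rot_nth: "zs \<noteq> [] \<Longrightarrow> i < length zs \<Longrightarrow> (tl zs @ [hd zs]) ! i = zs ! ((i+1) mod length zs)"
proof -
  assume ne: "zs \<noteq> []" and i: "i < length zs"
  show ?thesis
  proof (cases "i + 1 < length zs")
    case True
    then have "i < length (tl zs)" by simp
    then show ?thesis using True by (simp add: nth_append nth_tl)
  next
    case False
    then have "i = length zs - 1" using i by simp
    then show ?thesis using ne by (simp add: nth_append hd_conv_nth)
  qed
qed

lemma succ_nth: "distinct zs \<Longrightarrow> i < length zs \<Longrightarrow> succ_of zs (zs ! i) = zs ! ((i+1) mod length zs)"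
proof -
  assume d: "distinct zs" and i: "i < length zs"
  then have ne: "zs \<noteq> []" by auto
  have "map_of (zip zs (tl zs @ [hd zs])) (zs ! i) = Some ((tl zs @ [hd zs]) ! i)"
    by (rule map_of_zip_nth) (use d i ne in auto)
  then show ?thesis unfolding succ_of_def using rot_nth[OF ne i] by simp
qed

lemma succ_out: "x \<notin> set zs \<Longrightarrow> succ_of zs x = x"
proof (cases "zs = []")
  case True
  then show ?thesis by (simp add: succ_of_def)
next
  case False
  assume x: "x \<notin> set zs"
  have "length zs = length (tl zs @ [hd zs])" using False by (cases zs) auto
  then have "fst ` set (zip zs (tl zs @ [hd zs])) = set zs"
    by (metis map_fst_zip set_map)
  then have "map_of (zip zs (tl zs @ [hd zs])) x = None" using x by (simp add: map_of_eq_None_iff)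
  then show ?thesis unfolding succ_of_def by simp
qed

lemma succ_funpow: "distinct zs \<Longrightarrow> a < length zs \<Longrightarrow> (succ_of zs ^^ m) (zs ! a) = zs ! ((a + m) mod length zs)"
proof (induction m)
  case 0
  then show ?case by simp
next
  case (Suc m)
  have "length zs > 0" using Suc.prems(2) by linarith
  then have lt: "(a + m) mod length zs < length zs" by simp
  have "(succ_of zs ^^ Suc m) (zs ! a) = succ_of zs (zs ! ((a + m) mod length zs))" using Suc by simp
  also have "\<dots> = zs ! (((a + m) mod length zs + 1) mod length zs)" by (rule succ_nth[OF Suc.prems(1) lt])
  also have "((a + m) mod length zs + 1) mod length zs = (a + Suc m) mod length zs" by (simp add: mod_Suc_eq)
  finally show ?case .
qed

lemma succ_image: "distinct zs \<Longrightarrow> succ_of zs ` set zs = set zs"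
proof -
  assume d: "distinct zs"
  show ?thesis
  proof
    show "succ_of zs ` set zs \<subseteq> set zs"
    proof
      fix y assume "y \<in> succ_of zs ` set zs"
      then obtain i where i: "i < length zs" "y = succ_of zs (zs ! i)" by (auto simp: in_set_conv_nth)
      have "length zs > 0" using i(1) by linarith
      then have "(i + 1) mod length zs < length zs" by simp
      then show "y \<in> set zs" using succ_nth[OF d i(1)] by (simp add: i(2))
    qed
  next
    show "set zs \<subseteq> succ_of zs ` set zs"
    proof
      fix y assume "y \<in> set zs"
      then obtain i where i: "i < length zs" "y = zs ! i" by (auto simp: in_set_conv_nth)
      define k where "k = (i + length zs - 1) mod length zs"
      have "length zs > 0" using i(1) by linarith
      then have k: "k < length zs" unfolding k_def by simp
      have "(k + 1) mod length zs = i"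
      proof -
        have "(k + 1) mod length zs = ((i + length zs - 1) + 1) mod length zs" unfolding k_def by (simp add: mod_Suc_eq)
        also have "(i + length zs - 1) + 1 = i + length zs" using i by simp
        also have "(i + length zs) mod length zs = i" using i by simp
        finally show ?thesis .
      qed
      then have "succ_of zs (zs ! k) = y" using succ_nth[OF d k] i by simp
      moreover have "zs ! k \<in> set zs" using k by simp
      ultimately show "y \<in> succ_of zs ` set zs" by blast
    qed
  qed
qed

lemma succ_permutes: "distinct zs \<Longrightarrow> succ_of zs permutes set zs"
proof -
  assume d: "distinct zs"
  have im: "succ_of zs ` set zs = set zs" by (rule succ_image[OF d])
  have "inj_on (succ_of zs) (set zs)" by (rule eq_card_imp_inj_on) (simp_all add: im)
  then have "bij_betw (succ_of zs) (set zs) (set zs)" using im by (simp add: bij_betw_def)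
  then show ?thesis by (rule bij_imp_permutes) (simp add: succ_out)
qed

lemma pc_sum: "pc C zs = (\<Sum>k<length zs - 1. C (zs ! k) (zs ! Suc k))"
proof (induction C zs rule: pc.induct)
  case (3 C x y zs)
  have "pc C (x # y # zs) = C x y + pc C (y # zs)" by simp
  also have "\<dots> = C x y + (\<Sum>k<length zs. C ((y # zs) ! k) ((y # zs) ! Suc k))" using 3 by simp
  also have "\<dots> = (\<Sum>k<Suc (length zs). C ((x # y # zs) ! k) ((x # y # zs) ! Suc k))"
    by (subst sum.lessThan_Suc_shift) simp
  finally show ?case by simp
qed simp_all

lemma cc_sum: "zs \<noteq> [] \<Longrightarrow> cc C zs = (\<Sum>k<length zs. C (zs ! k) (zs ! ((k + 1) mod length zs)))"
proof -
  assume ne: "zs \<noteq> []"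
  define n where "n = length zs"
  have n: "n = Suc (n - 1)" using ne unfolding n_def by simp
  have "(\<Sum>k<n. C (zs ! k) (zs ! ((k + 1) mod n))) = (\<Sum>k<n - 1. C (zs ! k) (zs ! ((k + 1) mod n))) + C (zs ! (n - 1)) (zs ! ((n - 1 + 1) mod n))"
    by (subst n) (simp only: sum.lessThan_Suc)
  also have "(\<Sum>k<n - 1. C (zs ! k) (zs ! ((k + 1) mod n))) = (\<Sum>k<n - 1. C (zs ! k) (zs ! Suc k))"
    by (rule sum.cong) auto
  also have "(n - 1 + 1) mod n = 0" using n by (metis Suc_eq_plus1 mod_self)
  finally have "(\<Sum>k<n. C (zs ! k) (zs ! ((k + 1) mod n))) = pc C zs + C (last zs) (hd zs)"
    using ne unfolding pc_sum n_def by (simp add: last_conv_nth hd_conv_nth)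
  then show ?thesis unfolding cc_def n_def by simp
qed

lemma cyc_ok_nth: "zs \<noteq> [] \<Longrightarrow> cyc_ok zs \<longleftrightarrow> (\<forall>a<length zs. par (zs ! a) (zs ! ((a + 1) mod length zs)))"
proof -
  assume ne: "zs \<noteq> []"
  have l: "last zs = zs ! (length zs - 1)" "hd zs = zs ! 0" using ne by (simp_all add: last_conv_nth hd_conv_nth)
  show ?thesis
  proof
    assume c: "cyc_ok zs"
    show "\<forall>a<length zs. par (zs ! a) (zs ! ((a + 1) mod length zs))"
    proof (intro allI impI)
      fix a assume a: "a < length zs"
      show "par (zs ! a) (zs ! ((a + 1) mod length zs))"
      proof (cases "a + 1 < length zs")
        case True
        then show ?thesis using c unfolding cyc_ok_def successively_conv_nth by simp
      next
        case False
        then have a1: "a = length zs - 1" using a by simp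
        then have "a + 1 = length zs" using a by linarith
        then have "(a + 1) mod length zs = 0" by simp
        then show ?thesis using c l a1 unfolding cyc_ok_def by simp
      qed
    qed
  next
    assume h: "\<forall>a<length zs. par (zs ! a) (zs ! ((a + 1) mod length zs))"
    have "successively par zs" unfolding successively_conv_nth
    proof (intro allI impI)
      fix i assume "Suc i < length zs"
      then show "par (zs ! i) (zs ! Suc i)" using h[rule_format, of i] by simp
    qed
    moreover have "par (last zs) (hd zs)"
    proof -
      have "length zs - 1 < length zs" using ne by simp
      moreover have "(length zs - 1 + 1) mod length zs = 0" using ne by simp
      ultimately show ?thesis using h l by metis
    qed
    ultimately show "cyc_ok zs" unfolding cyc_ok_def by simp
  qed
qed

lemma list_tour:
  assumes d: "distinct zs" and s: "set zs = {1..n}" and c: "cyc_ok zs" and n: "n \<ge> 1"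
  shows "is_tour n (succ_of zs)" "feasible_eo n (succ_of zs)" "tour_length C n (succ_of zs) = cc C zs"
proof -
  have len: "length zs = n" using distinct_card[OF d] s by simp
  have p: "succ_of zs permutes {1..n}" using succ_permutes[OF d] s by simp
  show "is_tour n (succ_of zs)"
    unfolding is_tour_def
  proof (intro conjI p ballI)
    fix i j assume i: "i \<in> {1..n}" and j: "j \<in> {1..n}"
    obtain a where a: "a < n" "i = zs ! a" using i s len by (metis in_set_conv_nth)
    obtain b where b: "b < n" "j = zs ! b" using j s len by (metis in_set_conv_nth)
    have "(succ_of zs ^^ (b + n - a)) i = zs ! ((a + (b + n - a)) mod n)"
      using succ_funpow[OF d, of a "b + n - a"] a len by simp
    also have "a + (b + n - a) = b + n" using a by simp
    also have "(b + n) mod n = b" using b by simp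
    finally show "\<exists>m. (succ_of zs ^^ m) i = j" using b by blast
  qed
  have ne: "zs \<noteq> []" using len n by auto
  have step: "par x (succ_of zs x)" if x: "x \<in> {1..n}" for x
  proof -
    obtain a where a: "a < n" "x = zs ! a" using x s len by (metis in_set_conv_nth)
    have "par (zs ! a) (zs ! ((a + 1) mod length zs))" using c cyc_ok_nth[OF ne] a len by simp
    then show ?thesis using succ_nth[OF d, of a] a len by simp
  qed
  have inv_par: "par (inv_into {1..n} (succ_of zs) i) i" if i: "i \<in> {1..n}" for i
  proof -
    have im: "i \<in> succ_of zs ` {1..n}" using permutes_image[OF p] i by simp
    have q1: "inv_into {1..n} (succ_of zs) i \<in> {1..n}" by (rule inv_into_into[OF im])
    have q2: "succ_of zs (inv_into {1..n} (succ_of zs) i) = i" by (rule f_inv_into_f[OF im])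
    show ?thesis using step[OF q1] q2 by simp
  qed
  show "feasible_eo n (succ_of zs)"
    unfolding feasible_eo_def
  proof (rule conjI; intro ballI impI)
    fix i assume i: "i \<in> {1..n}" "odd i"
    then show "even (succ_of zs i) \<and> even (inv_into {1..n} (succ_of zs) i)"
      using step[OF i(1)] inv_par[OF i(1)] unfolding par_def by simp
  next
    fix i assume i: "i \<in> {1..n}" "even i"
    then show "odd (succ_of zs i) \<and> odd (inv_into {1..n} (succ_of zs) i)"
      using step[OF i(1)] inv_par[OF i(1)] unfolding par_def by simp
  qed
  have bij: "bij_betw ((!) zs) {..<n} {1..n}" by (rule bij_betw_nth[OF d]) (use len s in auto)
  have "tour_length C n (succ_of zs) = (\<Sum>k<n. C (zs ! k) (succ_of zs (zs ! k)))"
    unfolding tour_length_def by (rule sum.reindex_bij_betw[OF bij, symmetric])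
  also have "\<dots> = (\<Sum>k<n. C (zs ! k) (zs ! ((k + 1) mod n)))"
    by (rule sum.cong) (use succ_nth[OF d] len in auto)
  also have "\<dots> = cc C zs" using cc_sum[OF ne] len by simp
  finally show "tour_length C n (succ_of zs) = cc C zs" .
qed

lemma tour_orbit:
  assumes t: "is_tour n \<sigma>" and n: "n \<ge> 1"
  shows "inj_on (\<lambda>i. (\<sigma> ^^ i) 1) {..<n} \<and> (\<lambda>i. (\<sigma> ^^ i) 1) ` {..<n} = {1..n} \<and> (\<sigma> ^^ n) 1 = 1"
proof -
  define S where "S = {1..n}"
  define f where "f = (\<lambda>i. (\<sigma> ^^ i) 1)"
  have p: "\<sigma> permutes S" using t unfolding is_tour_def S_def by simp
  have reach: "\<forall>y\<in>S. \<exists>m. f m = y" using t n unfolding is_tour_def S_def f_def by auto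
  have inS: "f i \<in> S" for i
  proof (induction i)
    case 0 then show ?case using n unfolding f_def S_def by simp
  next
    case (Suc i) then show ?case using permutes_in_image[OF p] unfolding f_def by simp
  qed
  have cS: "card S = n" unfolding S_def by simp
  have "\<not> inj_on f {0..n}"
  proof
    assume "inj_on f {0..n}"
    then have "card {0..n} \<le> card S" by (rule card_inj_on_le) (use inS in \<open>auto simp: S_def\<close>)
    then show False using cS by simp
  qed
  then obtain a b where ab: "a \<in> {0..n}" "b \<in> {0..n}" "a \<noteq> b" "f a = f b" unfolding inj_on_def by blast
  obtain a b where ab: "a < b" "b \<le> n" "f a = f b"
  proof (cases "a < b")
    case True then show ?thesis using that ab by auto
  next
    case False then show ?thesis using that[of b a] ab by auto
  qed
  define q where "q = b - a"
  have q: "0 < q" "q \<le> n" using ab unfolding q_def by auto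
  have injs: "inj (\<sigma> ^^ a)" using permutes_inj[OF p] by simp
  have "(\<sigma> ^^ a) ((\<sigma> ^^ q) 1) = (\<sigma> ^^ a) 1"
  proof -
    have "(\<sigma> ^^ a) ((\<sigma> ^^ q) 1) = (\<sigma> ^^ (a + q)) 1" by (simp add: funpow_add)
    also have "a + q = b" using ab unfolding q_def by simp
    finally show ?thesis using ab unfolding f_def by simp
  qed
  then have fq: "f q = 1" using injs unfolding f_def by (simp add: inj_eq)
  have fm: "f (m mod q) = f m" for m unfolding f_def by (rule funpow_mod_eq) (use fq in \<open>simp add: f_def\<close>)
  have "S \<subseteq> f ` {..<q}"
  proof
    fix y assume "y \<in> S"
    then obtain m where "f m = y" using reach by blast
    then have "f (m mod q) = y" using fm by simp
    moreover have "m mod q < q" using q by simp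
    ultimately show "y \<in> f ` {..<q}" by blast
  qed
  then have "n \<le> card (f ` {..<q})" using cS by (metis card_mono finite_imageI finite_lessThan)
  also have "\<dots> \<le> q" using card_image_le[of "{..<q}" f] by simp
  finally have qn: "q = n" using q by simp
  have im: "f ` {..<n} = S" using \<open>S \<subseteq> f ` {..<q}\<close> inS qn by auto
  have "inj_on f {..<n}" by (rule eq_card_imp_inj_on) (simp_all add: im cS)
  then show ?thesis using im fq qn unfolding f_def S_def by simp
qed

lemma tour_list2:
  assumes t: "is_tour n \<sigma>" and fe: "feasible_eo n \<sigma>" and n: "n \<ge> 1"
  shows "\<exists>xs. distinct xs \<and> set xs = {1..n} \<and> hd xs = 1 \<and> cyc_ok xs \<and> cc C xs = tour_length C n \<sigma>"
proof -
  define f where "f = (\<lambda>i. (\<sigma> ^^ i) 1)"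
  define xs where "xs = map f [0..<n]"
  have o: "inj_on f {..<n}" "f ` {..<n} = {1..n}" "f n = 1" using tour_orbit[OF t n] unfolding f_def by auto
  have d: "distinct xs" unfolding xs_def distinct_map using o(1) by (simp add: lessThan_atLeast0)
  have s: "set xs = {1..n}" unfolding xs_def using o(2) by (simp add: lessThan_atLeast0)
  have len: "length xs = n" unfolding xs_def by simp
  have ne: "xs \<noteq> []" using len n by auto
  have h: "hd xs = 1" using n unfolding xs_def f_def by (simp add: hd_map hd_upt)
  have nx: "xs ! k = f k" if "k < n" for k using that unfolding xs_def by simp
  have st: "\<sigma> (xs ! k) = xs ! ((k + 1) mod n)" if k: "k < n" for k
  proof (cases "k + 1 < n")
    case True
    then show ?thesis using nx k unfolding f_def by simp
  next
    case False
    then have kn: "k + 1 = n" using k by simp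
    have "\<sigma> (xs ! k) = \<sigma> (f k)" using nx k by simp
    also have "\<dots> = f (k + 1)" unfolding f_def by simp
    also have "\<dots> = 1" using kn o(3) by simp
    also have "\<dots> = xs ! 0" using nx n unfolding f_def by simp
    also have "0 = (k + 1) mod n" using kn by simp
    finally show ?thesis .
  qed
  have feas: "par x (\<sigma> x)" if x: "x \<in> {1..n}" for x
    using fe x unfolding feasible_eo_def par_def by auto
  have c: "cyc_ok xs" unfolding cyc_ok_nth[OF ne]
  proof (intro allI impI)
    fix a assume a: "a < length xs"
    have "xs ! a \<in> {1..n}" using s a by (metis nth_mem)
    then show "par (xs ! a) (xs ! ((a + 1) mod length xs))" using feas st a len by metis
  qed
  have bij: "bij_betw ((!) xs) {..<n} {1..n}" by (rule bij_betw_nth[OF d]) (use len s in auto)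
  have "tour_length C n \<sigma> = (\<Sum>k<n. C (xs ! k) (\<sigma> (xs ! k)))"
    unfolding tour_length_def by (rule sum.reindex_bij_betw[OF bij, symmetric])
  also have "\<dots> = (\<Sum>k<n. C (xs ! k) (xs ! ((k + 1) mod n)))"
    by (rule sum.cong) (use st in auto)
  also have "\<dots> = cc C xs" using cc_sum[OF ne] len by simp
  finally show ?thesis using d s h c by metis
qed

lemma pyr_from_valley:
  assumes d: "distinct ys" and s: "set ys = {1..n}" and l: "last ys = n" and v: "valley ys" and n: "n \<ge> 2"
  shows "\<exists>zs. distinct zs \<and> set zs = {1..n} \<and> cc C zs = cc C ys \<and> cyc_ok zs = cyc_ok ys \<and> pyramidal n (succ_of zs)"
proof -
  obtain P Q where ys: "ys = P @ 1 # Q" and sP: "sorted_wrt (>) (P @ [1])" and sQ: "sorted_wrt (<) (1 # Q)"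
    using v unfolding valley_def by blast
  define zs where "zs = (1 # Q) @ P"
  have cc1: "cc C zs = cc C ys" unfolding zs_def ys using cc_rot[where C=C and xs=P and ys="1 # Q"] by simp
  have ok1: "cyc_ok zs = cyc_ok ys" unfolding zs_def ys using cyc_ok_rot[where xs=P and ys="1 # Q"] by simp
  have sz: "set zs = {1..n}" using s unfolding zs_def ys by auto
  have dz: "distinct zs" using d unfolding zs_def ys by auto
  have Qne: "Q \<noteq> []"
  proof
    assume "Q = []"
    then have "last ys = 1" unfolding ys by simp
    then show False using l n by simp
  qed
  have lastQ: "last (1 # Q) = n" using l Qne unfolding ys by simp
  define m where "m = length Q"
  have len: "length zs = n" using distinct_card[OF dz] sz by simp
  have lenm: "n = m + 1 + length P" using len unfolding zs_def m_def by simp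
  have z0: "zs ! 0 = 1" unfolding zs_def by simp
  have tp: "(succ_of zs ^^ i) 1 = zs ! i" if i: "i < n" for i
  proof -
    have "(succ_of zs ^^ i) (zs ! 0) = zs ! ((0 + i) mod length zs)"
      by (rule succ_funpow[OF dz]) (use len n in simp)
    then show ?thesis using z0 len i by simp
  qed
  have zi1: "zs ! i = (1 # Q) ! i" if "i \<le> m" for i
    using that unfolding zs_def m_def by (simp only: nth_append) simp
  have zm: "zs ! m = n"
  proof -
    have "(1 # Q) ! m = last (1 # Q)" unfolding m_def by (simp add: last_conv_nth)
    then show ?thesis using zi1[of m] lastQ by simp
  qed
  define W where "W = n # P"
  have bl: "1 # Q = butlast (1 # Q) @ [n]" using lastQ by (metis append_butlast_last_id list.distinct(1))
  have zsW: "zs = butlast (1 # Q) @ W" unfolding zs_def W_def by (subst bl) simp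
  have lb: "length (butlast (1 # Q)) = m" unfolding m_def by simp
  have zi2: "zs ! i = W ! (i - m)" if "m \<le> i" for i
    using that unfolding zsW by (simp only: nth_append lb) simp
  have sW: "sorted_wrt (>) W"
  proof -
    have "sorted_wrt (>) P" using sP by (simp add: sorted_wrt_append)
    moreover have "\<forall>x\<in>set P. x < n"
    proof
      fix x assume x: "x \<in> set P"
      then have "x \<in> {1..n}" using s unfolding ys by auto
      moreover have "x \<noteq> n"
      proof
        assume "x = n"
        moreover have "n \<in> set (1 # Q)" using lastQ by (metis last_in_set list.distinct(1))
        ultimately show False using x d unfolding ys by auto
      qed
      ultimately show "x < n" by simp
    qed
    ultimately show ?thesis unfolding W_def by simp
  qed
  have lW: "length W = n - m" unfolding W_def using lenm by simp
  show ?thesis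
  proof (intro exI conjI)
    show "pyramidal n (succ_of zs)"
      unfolding pyramidal_def
    proof (intro exI conjI allI impI)
      show "0 < m" using Qne unfolding m_def by simp
      show "m < n" using lenm by simp
      show "(succ_of zs ^^ m) 1 = n" using tp[of m] zm lenm by simp
    next
      fix i j assume ij: "i < j \<and> j \<le> m"
      have "(1 # Q) ! i < (1 # Q) ! j" by (rule sorted_wrt_nth_less[OF sQ]) (use ij m_def in auto)
      then show "(succ_of zs ^^ i) 1 < (succ_of zs ^^ j) 1" using tp zi1 ij lenm by simp
    next
      fix i j assume ij: "m \<le> i \<and> i < j \<and> j < n"
      have "i - m < j - m" "j - m < length W" using ij lW by auto
      then have "W ! (j - m) < W ! (i - m)"
        using sorted_wrt_nth_less[OF sW, of "i - m" "j - m"] by simp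
      then show "(succ_of zs ^^ j) 1 < (succ_of zs ^^ i) 1" using tp zi2 ij by simp
    qed
  qed (use dz sz cc1 ok1 in auto)
qed

lemma valley_one: "valley [1]"
  unfolding valley_def by (rule exI[of _ "[]"], rule exI[of _ "[]"]) simp

lemma upt_cyc_ok:
  assumes "even n" "n \<ge> 1"
  shows "cyc_ok [1..<n+1]"
proof -
  have "successively par [1..<n+1]" unfolding successively_conv_nth
  proof (intro allI impI)
    fix i assume "Suc i < length [1..<n+1]"
    then have "Suc i < n" by (simp del: upt_Suc)
    then have "[1..<n+1] ! i = 1 + i" "[1..<n+1] ! Suc i = 1 + Suc i" by (simp_all del: upt_Suc)
    then show "par ([1..<n+1] ! i) ([1..<n+1] ! Suc i)" unfolding par_def by simp
  qed
  moreover have "last [1..<n+1] = n" using assms by (simp del: upt_Suc)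
  moreover have "hd [1..<n+1] = 1" using assms by (simp del: upt_Suc)
  moreover have "par n 1" using assms unfolding par_def by simp
  ultimately show ?thesis unfolding cyc_ok_def by simp
qed

theorem corollary3p3:
  fixes k n :: nat and C :: "nat \<Rightarrow> nat \<Rightarrow> real"
  assumes "k \<ge> 1" and "n = 2 * k"
    and "symmetric_matrix n C" and "relaxed_vdv n C"
  shows "\<exists>\<tau>. is_tour n \<tau> \<and> feasible_eo n \<tau> \<and> pyramidal n \<tau> \<and>
           (\<forall>\<sigma>. is_tour n \<sigma> \<and> feasible_eo n \<sigma> \<longrightarrow> tour_length C n \<tau> \<le> tour_length C n \<sigma>)"
proof -
  have n2: "n \<ge> 2" using assms(1,2) by simp
  then have n1: "n \<ge> 1" by simp
  have ev: "even n" using assms(2) by simp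
  have sym: "symon {1..n} C" using assms(3) unfolding symmetric_matrix_def symon_def .
  define PT where "PT = {\<tau>. is_tour n \<tau> \<and> feasible_eo n \<tau> \<and> pyramidal n \<tau>}"
  have main: "\<exists>\<pi>\<in>PT. tour_length C n \<pi> \<le> cc C xs"
    if xs: "distinct xs" "set xs = {1..n}" "hd xs = 1" "cyc_ok xs" for xs
  proof -
    have ne: "xs \<noteq> []" using xs(2) n1 by auto
    then obtain R where xs1: "xs = 1 # R" using xs(3) by (cases xs) auto
    have "\<exists>ys. distinct ys \<and> set ys = {1..n} \<and> last ys = n \<and> valley ys \<and> cyc_ok ys \<and> cc C ys \<le> cc C ([1] @ R)"
    proof -
      have f1: "distinct ([1] @ R)" using xs(1) unfolding xs1 by simp
      have f2: "set ([1] @ R) = {1..n}" using xs(2) unfolding xs1 by simp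
      have f3: "cyc_ok ([1] @ R)" using xs(4) unfolding xs1 by simp
      have f4: "set [1::nat] = {1..1}" by simp
      have f5: "last [1::nat] = 1" by simp
      show ?thesis by (rule core[OF sym assms(4) refl f1 f2 f4 le_refl f5 valley_one f3])
    qed
    then obtain ys where ys: "distinct ys" "set ys = {1..n}" "last ys = n" "valley ys" "cyc_ok ys" "cc C ys \<le> cc C xs"
      unfolding xs1 by auto
    obtain zs where zs: "distinct zs" "set zs = {1..n}" "cc C zs = cc C ys" "cyc_ok zs = cyc_ok ys" "pyramidal n (succ_of zs)"
      using pyr_from_valley[OF ys(1-4) n2, of C] by blast
    have okz: "cyc_ok zs" using zs(4) ys(5) by simp
    have t: "is_tour n (succ_of zs)" "feasible_eo n (succ_of zs)" "tour_length C n (succ_of zs) = cc C zs"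
      using list_tour[OF zs(1) zs(2) okz n1] by auto
    have "succ_of zs \<in> PT" unfolding PT_def using t zs(5) by simp
    moreover have "tour_length C n (succ_of zs) \<le> cc C xs" using t(3) zs(3) ys(6) by simp
    ultimately show ?thesis by blast
  qed
  have fin: "finite PT"
  proof (rule finite_subset)
    show "PT \<subseteq> {p. p permutes {1..n}}"
    proof
      fix p assume "p \<in> PT"
      then have "is_tour n p" unfolding PT_def by simp
      then show "p \<in> {p. p permutes {1..n}}" unfolding is_tour_def by simp
    qed
    show "finite {p. p permutes {1..n}}" by (rule finite_permutations) simp
  qed
  have "PT \<noteq> {}"
  proof -
    have a1: "distinct [1..<n+1]" by (simp del: upt_Suc)
    have a2: "set [1..<n+1] = {1..n}" by (simp del: upt_Suc add: atLeastLessThanSuc_atLeastAtMost)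
    have a3: "hd [1..<n+1] = 1" using n1 by (simp del: upt_Suc)
    have a4: "cyc_ok [1..<n+1]" by (rule upt_cyc_ok[OF ev n1])
    obtain \<pi> where "\<pi> \<in> PT" using main[OF a1 a2 a3 a4] by blast
    then show ?thesis by auto
  qed
  define M where "M = Min (tour_length C n ` PT)"
  have "M \<in> tour_length C n ` PT" unfolding M_def using fin \<open>PT \<noteq> {}\<close> by (intro Min_in) auto
  then obtain \<tau> where \<tau>: "\<tau> \<in> PT" "tour_length C n \<tau> = M" by blast
  have le: "M \<le> tour_length C n \<pi>" if "\<pi> \<in> PT" for \<pi>
    unfolding M_def using fin that by (intro Min_le) auto
  show ?thesis
  proof (intro exI conjI allI impI)
    show "is_tour n \<tau>" "feasible_eo n \<tau>" "pyramidal n \<tau>" using \<tau>(1) unfolding PT_def by auto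
  next
    fix \<sigma> assume \<sigma>: "is_tour n \<sigma> \<and> feasible_eo n \<sigma>"
    obtain xs where xs: "distinct xs" "set xs = {1..n}" "hd xs = 1" "cyc_ok xs" "cc C xs = tour_length C n \<sigma>"
      using tour_list2[of n \<sigma> C] \<sigma> n1 by blast
    obtain \<pi> where "\<pi> \<in> PT" "tour_length C n \<pi> \<le> cc C xs" using main[OF xs(1-4)] by blast
    then show "tour_length C n \<tau> \<le> tour_length C n \<sigma>" using le \<tau>(2) xs(5) by fastforce
  qed
qed

end
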